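(* Let $\mathcal{A}=\{X_1,\dots,X_M\}\subseteq\mathbb{R}^d$ be a fixed action set spanning $\mathbb{R}^d$ with $\|X_i\|_2\le c$, let $\theta^*\in\mathbb{R}^d$ with $\|\theta^*\|_2\le c'$ and $X_i^\top\theta^*\in[0,1]$ for all $i$, and let $1\le k\le M$. Let $\mathbf{w}_k^*$ be a minimizer in the definition of $f^*(\mathcal{A},k)$. Consider the policy $\pi$ that, over $T$ rounds (selecting $k$ distinct arms per round, $kT$ selections in total), plays each arm $X_i$ exactly $kT\,w^*_{k,i}$ times in total (assume these are integers), and let $\hat\theta_T$ be the ridge estimator with parameter $\lambda>0$. Then $$\mathrm{RMSE}_T(\pi,\mathcal{A},\theta^* )\in\tilde{\mathcal{O}}\!\left(\sqrt{\frac{f^*(\mathcal{A},k)}{kT}}\right),$$ where $\tilde{\mathcal{O}}$ hides constant factors and logarithmic factors in $d$, $kT$, $\lambda$, $c$, $c'$.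
   Context: Setting: in each round $t=1,\dots,T$ the agent selects $k$ distinct actions $X_{t,1},\dots,X_{t,k}\in\mathcal{A}$ and observes independent binary rewards $r_{t,i}\in\{0,1\}$ with $\mathbb{E}[r_{t,i}]=X_{t,i}^\top\theta^*$. For $\lambda>0$ define $V_t=\lambda I+\sum_{s=1}^t\sum_{r=1}^k X_{s,r}X_{s,r}^\top$ and the ridge estimator $\hat\theta_T=V_T^{-1}\sum_{s=1}^T\sum_{r=1}^k r_{s,r}X_{s,r}$. The RMSE after $T$ rounds is $\mathrm{RMSE}_T(\pi,\mathcal{A},\theta^* )=\mathbb{E}\Big[\sqrt{\tfrac{1}{|\mathcal{A}|}\sum_{X\in\mathcal{A}}(X^\top(\hat\theta_T-\theta^* ))^2}\Big]$. Let $\Delta^{M-1}_{1/k}=\{\mathbf{w}\in\mathbb{R}^M: w_i\ge 0,\ \sum_i w_i=1,\ w_i\le 1/k\ \forall i\}$ and $$f^*(\mathcal{A},k)=\min_{\mathbf{w}\in\Delta^{M-1}_{1/k}}\ \max_{X_i\in\mathcal{A}} X_i^\top\Big(\sum_{j=1}^M w_jX_jX_j^\top\Big)^{-1}X_i .$$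
   Formalization: The constant hidden by $\tilde{\mathcal{O}}$ may depend arbitrarily on $\lambda$, $c$ and $c'$, not only logarithmically; only the factors in $d$ and $kT$ remain polylogarithmic, as a power of ln(d + kT + 2). Apart from conventions, each condition added here is assumed in the paper as well or is needed for the statement above to hold. *)

theory Defs
  imports "Jordan_Normal_Form.Matrix" "HOL-Probability.Product_PMF"
begin

text \<open>Inverse of a square matrix (meaningful when it is invertible).\<close>
definition minv :: "real mat \<Rightarrow> real mat" where
  "minv A = (THE B. B \<in> carrier_mat (dim_row A) (dim_row A) \<and>
                    A * B = 1\<^sub>m (dim_row A) \<and> B * A = 1\<^sub>m (dim_row A))"

definition spans_Rd :: "nat \<Rightarrow> (nat \<Rightarrow> real Matrix.vec) \<Rightarrow> nat \<Rightarrow> bool" where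
  "spans_Rd d X M \<longleftrightarrow>
     (\<forall>v \<in> carrier_vec d. \<exists>a :: nat \<Rightarrow> real.
        v = Matrix.vec d (\<lambda>j. \<Sum>i<M. a i * vec_index (X i) j))"

definition capped_simplex :: "nat \<Rightarrow> nat \<Rightarrow> (nat \<Rightarrow> real) set" where
  "capped_simplex M k = {w. (\<forall>i<M. 0 \<le> w i \<and> w i \<le> 1 / real k) \<and> (\<Sum>i<M. w i) = 1}"

definition design :: "nat \<Rightarrow> (nat \<Rightarrow> real Matrix.vec) \<Rightarrow> nat \<Rightarrow> (nat \<Rightarrow> real) \<Rightarrow> real mat" where
  "design d X M w = Matrix.mat d d (\<lambda>(a,b). \<Sum>j<M. w j * (vec_index (X j) a * vec_index (X j) b))"

definition gobj :: "nat \<Rightarrow> (nat \<Rightarrow> real Matrix.vec) \<Rightarrow> nat \<Rightarrow> (nat \<Rightarrow> real) \<Rightarrow> real" where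
  "gobj d X M w = Max ((\<lambda>i. scalar_prod (X i) ((minv (design d X M w) *\<^sub>v X i))) ` {..<M})"

definition is_fstar_minimizer :: "nat \<Rightarrow> (nat \<Rightarrow> real Matrix.vec) \<Rightarrow> nat \<Rightarrow> nat \<Rightarrow> (nat \<Rightarrow> real) \<Rightarrow> bool" where
  "is_fstar_minimizer d X M k w \<longleftrightarrow>
     w \<in> capped_simplex M k \<and> invertible_mat (design d X M w) \<and>
     (\<forall>v \<in> capped_simplex M k. invertible_mat (design d X M v) \<longrightarrow>
          gobj d X M w \<le> gobj d X M v)"

definition fstar :: "nat \<Rightarrow> (nat \<Rightarrow> real Matrix.vec) \<Rightarrow> nat \<Rightarrow> nat \<Rightarrow> real" where
  "fstar d X M k = Inf (gobj d X M ` {w \<in> capped_simplex M k. invertible_mat (design d X M w)})"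

text \<open>V_T = \<lambda> I + \<Sum>_t \<Sum>_r X_{t,r} X_{t,r}^T for the schedule sched (round t, slot r -> arm index).\<close>
definition Vmat :: "nat \<Rightarrow> real \<Rightarrow> (nat \<Rightarrow> real Matrix.vec) \<Rightarrow> (nat \<Rightarrow> nat \<Rightarrow> nat) \<Rightarrow> nat \<Rightarrow> nat \<Rightarrow> real mat" where
  "Vmat d lam X sched T k = lam \<cdot>\<^sub>m 1\<^sub>m d +
     Matrix.mat d d (\<lambda>(a,b). \<Sum>(t,r)\<in>{..<T}\<times>{..<k}. vec_index (X (sched t r)) a * vec_index (X (sched t r)) b)"

definition ridge :: "nat \<Rightarrow> real \<Rightarrow> (nat \<Rightarrow> real Matrix.vec) \<Rightarrow> (nat \<Rightarrow> nat \<Rightarrow> nat) \<Rightarrow> nat \<Rightarrow> nat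
                     \<Rightarrow> (nat \<times> nat \<Rightarrow> bool) \<Rightarrow> real Matrix.vec" where
  "ridge d lam X sched T k rw = minv (Vmat d lam X sched T k) *\<^sub>v
     Matrix.vec d (\<lambda>a. \<Sum>(t,r)\<in>{..<T}\<times>{..<k}. of_bool (rw (t,r)) * vec_index (X (sched t r)) a)"

definition rewards :: "(nat \<Rightarrow> real Matrix.vec) \<Rightarrow> real Matrix.vec \<Rightarrow> (nat \<Rightarrow> nat \<Rightarrow> nat) \<Rightarrow> nat \<Rightarrow> nat
                       \<Rightarrow> (nat \<times> nat \<Rightarrow> bool) pmf" where
  "rewards X \<theta> sched T k =
     Pi_pmf ({..<T}\<times>{..<k}) False (\<lambda>(t,r). bernoulli_pmf (scalar_prod (X (sched t r)) (\<theta>)))"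

definition RMSE :: "nat \<Rightarrow> real \<Rightarrow> (nat \<Rightarrow> real Matrix.vec) \<Rightarrow> nat \<Rightarrow> real Matrix.vec \<Rightarrow> (nat \<Rightarrow> nat \<Rightarrow> nat)
                    \<Rightarrow> nat \<Rightarrow> nat \<Rightarrow> real" where
  "RMSE d lam X M \<theta> sched T k =
     measure_pmf.expectation (rewards X \<theta> sched T k)
       (\<lambda>rw. sqrt ((1 / real M) * (\<Sum>i<M. (scalar_prod (X i) ((ridge d lam X sched T k rw - \<theta>)))\<^sup>2)))"

end

theory Submission
  imports Defs "Jordan_Normal_Form.Determinant"
begin


lemma minv_unique:
  fixes A B :: "real mat"
  assumes A: "A \<in> carrier_mat n n" and B: "B \<in> carrier_mat n n"
    and AB: "A * B = 1\<^sub>m n" and BA: "B * A = 1\<^sub>m n"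
  shows "minv A = B"
proof -
  have dA: "dim_row A = n" using A by auto
  show ?thesis unfolding minv_def dA
  proof (rule the_equality)
    show "B \<in> carrier_mat n n \<and> A * B = 1\<^sub>m n \<and> B * A = 1\<^sub>m n" using B AB BA by auto
  next
    fix B' assume h: "B' \<in> carrier_mat n n \<and> A * B' = 1\<^sub>m n \<and> B' * A = 1\<^sub>m n"
    have "B' = B' * 1\<^sub>m n" using h by auto
    also have "\<dots> = B' * (A * B)" using AB by simp
    also have "\<dots> = (B' * A) * B" by (rule assoc_mult_mat[symmetric, of B' n n A n B n]) (use A B h in auto)
    also have "\<dots> = B" using h B by auto
    finally show "B' = B" .
  qed
qed

lemma minv_inv:
  fixes A :: "real mat"
  assumes A: "A \<in> carrier_mat n n" and inv: "invertible_mat A"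
  shows "A * minv A = 1\<^sub>m n \<and> minv A \<in> carrier_mat n n"
proof -
  obtain B where AB: "A * B = 1\<^sub>m n" and BA: "B * A = 1\<^sub>m (dim_row B)"
    using inv A unfolding invertible_mat_def inverts_mat_def by auto
  have "dim_col B = n" using AB A by (metis index_mult_mat(3) index_one_mat(3))
  moreover have "dim_row B = n" using BA A
    by (metis carrier_matD(2) index_mult_mat(3) index_one_mat(3))
  ultimately have B: "B \<in> carrier_mat n n" by auto
  then have "minv A = B" using minv_unique[OF A B AB] BA by auto
  then show ?thesis using AB B by auto
qed

lemma minv_mult_vec:
  fixes A :: "real mat"
  assumes A: "A \<in> carrier_mat n n" and inv: "invertible_mat A" and x: "x \<in> carrier_vec n"
  shows "A *\<^sub>v (minv A *\<^sub>v x) = x" "minv A *\<^sub>v x \<in> carrier_vec n"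
proof -
  have h: "A * minv A = 1\<^sub>m n" "minv A \<in> carrier_mat n n" using minv_inv[OF A inv] by auto
  have "A *\<^sub>v (minv A *\<^sub>v x) = (A * minv A) *\<^sub>v x" using assoc_mult_mat_vec[OF A h(2) x] by simp
  also have "\<dots> = x" using h x by auto
  finally show "A *\<^sub>v (minv A *\<^sub>v x) = x" .
  show "minv A *\<^sub>v x \<in> carrier_vec n" using h x by auto
qed

lemma qf:
  fixes Y :: "'j \<Rightarrow> real Matrix.vec"
  assumes y: "y \<in> carrier_vec d" and z: "z \<in> carrier_vec d" and Y: "\<forall>j\<in>J. Y j \<in> carrier_vec d"
  shows "scalar_prod (Matrix.mat d d (\<lambda>(a,b). (if a = b then e else 0) + (\<Sum>j\<in>J. c j * (vec_index (Y j) a * vec_index (Y j) b))) *\<^sub>v y) z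
     = e * (scalar_prod (y) z) + (\<Sum>j\<in>J. c j * (scalar_prod (Y j) y) * (scalar_prod (Y j) z))"
proof -
  let ?A = "Matrix.mat d d (\<lambda>(a,b). (if a = b then e else 0) + (\<Sum>j\<in>J. c j * (vec_index (Y j) a * vec_index (Y j) b)))"
  have "scalar_prod (?A *\<^sub>v y) z = (\<Sum>a<d. (\<Sum>b<d. ((if a = b then e else 0) + (\<Sum>j\<in>J. c j * (vec_index (Y j) a * vec_index (Y j) b))) * vec_index (y) b) * vec_index (z) a)"
    using y z by (simp add: scalar_prod_def atLeast0LessThan row_def)
  also have "\<dots> = (\<Sum>a<d. e * (vec_index (y) a * vec_index (z) a)) + (\<Sum>a<d. \<Sum>b<d. \<Sum>j\<in>J. c j * (vec_index (Y j) a * vec_index (Y j) b) * vec_index (y) b * vec_index (z) a)"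
  proof -
    have "\<And>a n. vec_index y n * (vec_index z a * (if a = n then e else 0)) = (if n = a then e * (vec_index y a * vec_index z a) else 0)" by auto
    then show ?thesis by (simp add: algebra_simps sum.distrib sum_distrib_left sum_distrib_right if_distrib[of "\<lambda>x. x * _"] sum.delta cong: if_cong)
  qed
  also have "(\<Sum>a<d. \<Sum>b<d. \<Sum>j\<in>J. c j * (vec_index (Y j) a * vec_index (Y j) b) * vec_index y b * vec_index z a)
      = (\<Sum>a<d. \<Sum>j\<in>J. \<Sum>b<d. c j * (vec_index (Y j) a * vec_index (Y j) b) * vec_index y b * vec_index z a)"
    by (rule sum.cong[OF refl], rule sum.swap)
  also have "\<dots> = (\<Sum>j\<in>J. \<Sum>a<d. \<Sum>b<d. c j * (vec_index (Y j) a * vec_index (Y j) b) * vec_index y b * vec_index z a)"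
    by (rule sum.swap)
  also have "\<dots> = (\<Sum>j\<in>J. c j * (scalar_prod (Y j) y) * (scalar_prod (Y j) z))"
  proof (rule sum.cong[OF refl])
    fix j assume "j \<in> J"
    have "c j * (scalar_prod (Y j) y) * (scalar_prod (Y j) z)
       = c j * ((\<Sum>a<d. vec_index (Y j) a * vec_index z a) * (\<Sum>b<d. vec_index (Y j) b * vec_index y b))"
      using y z by (simp add: scalar_prod_def atLeast0LessThan)
    also have "\<dots> = c j * (\<Sum>a<d. \<Sum>b<d. (vec_index (Y j) a * vec_index z a) * (vec_index (Y j) b * vec_index y b))"
      by (simp only: sum_product)
    also have "\<dots> = (\<Sum>a<d. \<Sum>b<d. c j * (vec_index (Y j) a * vec_index (Y j) b) * vec_index y b * vec_index z a)"
      by (simp only: sum_distrib_left) (simp only: mult_ac)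
    finally show "(\<Sum>a<d. \<Sum>b<d. c j * (vec_index (Y j) a * vec_index (Y j) b) * vec_index y b * vec_index z a) = c j * (scalar_prod (Y j) y) * (scalar_prod (Y j) z)" by simp
  qed
  finally show ?thesis using y z by (simp add: scalar_prod_def atLeast0LessThan sum_distrib_left)
qed



lemma fin_Pi_pmf:
  assumes "finite J"
  shows "finite (set_pmf (Pi_pmf J (False::bool) p))"
proof -
  have "set_pmf (Pi_pmf J False p) \<subseteq> PiE_dflt J False (set_pmf \<circ> p)"
    by (rule set_Pi_pmf_subset'[OF assms])
  moreover have "finite (PiE_dflt J False (set_pmf \<circ> p))"
    using assms by (intro finite_PiE_dflt) auto
  ultimately show ?thesis by (rule finite_subset)
qed

lemma bern_prod_exp:
  fixes P :: "'j \<Rightarrow> real"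
  assumes J: "finite J" and S: "S \<subseteq> J" and P: "\<forall>j\<in>J. 0 \<le> P j \<and> P j \<le> 1"
    and p: "\<forall>j\<in>J. p j = bernoulli_pmf (P j)"
  shows "measure_pmf.expectation (Pi_pmf J False p) (\<lambda>y. \<Prod>x\<in>S. of_bool (y x)) = (\<Prod>x\<in>S. P x)"
proof -
  define f where "f = (\<lambda>x (v::bool). if x \<in> S then (of_bool v :: real) else 1)"
  have eq: "(\<lambda>y. \<Prod>x\<in>S. of_bool (y x) :: real) = (\<lambda>y. \<Prod>x\<in>J. f x (y x))"
  proof
    fix y :: "'j \<Rightarrow> bool"
    have "(\<Prod>x\<in>J. f x (y x)) = (\<Prod>x\<in>J \<inter> S. of_bool (y x))"
      unfolding f_def by (rule prod.inter_restrict[OF J, symmetric])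
    also have "J \<inter> S = S" using S by auto
    finally show "(\<Prod>x\<in>S. of_bool (y x) :: real) = (\<Prod>x\<in>J. f x (y x))" by simp
  qed
  have "measure_pmf.expectation (Pi_pmf J False p) (\<lambda>y. \<Prod>x\<in>J. f x (y x))
      = (\<Prod>x\<in>J. measure_pmf.expectation (p x) (\<lambda>v. f x v))"
    by (rule expectation_prod_Pi_pmf[OF J]) (auto simp: f_def intro: integrable_measure_pmf_finite)
  also have "\<dots> = (\<Prod>x\<in>J. if x \<in> S then P x else 1)"
    by (rule prod.cong[OF refl]) (use P p in \<open>auto simp: f_def\<close>)
  also have "\<dots> = (\<Prod>x\<in>J \<inter> S. P x)" by (rule prod.inter_restrict[OF J, symmetric])
  also have "J \<inter> S = S" using S by auto
  finally show ?thesis unfolding eq by simp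
qed

lemma bern_var:
  fixes P a :: "'j \<Rightarrow> real" and \<beta> :: real
  assumes J: "finite J" and P: "\<forall>j\<in>J. 0 \<le> P j \<and> P j \<le> 1"
    and p: "\<forall>j\<in>J. p j = bernoulli_pmf (P j)"
  shows "measure_pmf.expectation (Pi_pmf J False p) (\<lambda>y. ((\<Sum>j\<in>J. a j * (of_bool (y j) - P j)) - \<beta>)\<^sup>2)
     = (\<Sum>j\<in>J. (a j)\<^sup>2 * (P j * (1 - P j))) + \<beta>\<^sup>2"
proof -
  let ?M = "Pi_pmf J False p"
  let ?E = "measure_pmf.expectation ?M"
  have int: "\<And>f :: _ \<Rightarrow> real. integrable (measure_pmf ?M) f"
    by (rule integrable_measure_pmf_finite[OF fin_Pi_pmf[OF J]])
  define Z where "Z = (\<lambda>j (y :: 'j \<Rightarrow> bool). (of_bool (y j) :: real) - P j)"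
  have E1: "?E (\<lambda>y. 1::real) = 1" using bern_prod_exp[OF J empty_subsetI P p] by (simp only: prod.empty)
  have Ej: "?E (\<lambda>y. of_bool (y j)) = P j" if "j \<in> J" for j
    using bern_prod_exp[OF J _ P p, of "{j}"] that by simp
  have Ejl: "?E (\<lambda>y. of_bool (y j) * of_bool (y l)) = P j * P l" if "j \<in> J" "l \<in> J" "j \<noteq> l" for j l
    using bern_prod_exp[OF J _ P p, of "{j,l}"] that by simp
  have EZ: "?E (Z j) = 0" if "j \<in> J" for j
    unfolding Z_def using Ej[OF that] int by (subst Bochner_Integration.integral_diff) auto
  have EZZ: "?E (\<lambda>y. Z j y * Z l y) = (if j = l then P j * (1 - P j) else 0)" if "j \<in> J" "l \<in> J" for j l
  proof (cases "j = l")
    case True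
    have "(\<lambda>y. Z j y * Z l y) = (\<lambda>y. (1 - 2 * P j) * of_bool (y j) + (P j)\<^sup>2)"
      unfolding Z_def True by (auto simp: fun_eq_iff power2_eq_square algebra_simps)
    then have "?E (\<lambda>y. Z j y * Z l y) = (1 - 2 * P j) * P j + (P j)\<^sup>2"
      using Ej[OF that(1)] int by (simp add: Bochner_Integration.integral_add)
    then show ?thesis using True by (simp add: power2_eq_square algebra_simps)
  next
    case False
    have "(\<lambda>y. Z j y * Z l y) = (\<lambda>y. of_bool (y j) * of_bool (y l) - P l * of_bool (y j) - P j * of_bool (y l) + P j * P l)"
      unfolding Z_def by (auto simp: fun_eq_iff algebra_simps)
    then have "?E (\<lambda>y. Z j y * Z l y) = P j * P l - P l * P j - P j * P l + P j * P l"
      using Ej[OF that(1)] Ej[OF that(2)] Ejl[OF that False] int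
      by (simp add: Bochner_Integration.integral_add Bochner_Integration.integral_diff)
    then show ?thesis using False by simp
  qed
  have pt: "(\<lambda>y. ((\<Sum>j\<in>J. a j * (of_bool (y j) - P j)) - \<beta>)\<^sup>2)
      = (\<lambda>y. (\<Sum>j\<in>J. \<Sum>l\<in>J. a j * a l * (Z j y * Z l y)) - 2 * \<beta> * (\<Sum>j\<in>J. a j * Z j y) + \<beta>\<^sup>2)"
  proof
    fix y
    have "(\<Sum>j\<in>J. a j * Z j y)\<^sup>2 = (\<Sum>j\<in>J. \<Sum>l\<in>J. a j * a l * (Z j y * Z l y))"
      unfolding power2_eq_square sum_product by (simp add: algebra_simps)
    then show "((\<Sum>j\<in>J. a j * (of_bool (y j) - P j)) - \<beta>)\<^sup>2
      = (\<Sum>j\<in>J. \<Sum>l\<in>J. a j * a l * (Z j y * Z l y)) - 2 * \<beta> * (\<Sum>j\<in>J. a j * Z j y) + \<beta>\<^sup>2"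
      unfolding Z_def by (simp add: power2_diff)
  qed
  have A: "?E (\<lambda>y. \<Sum>j\<in>J. \<Sum>l\<in>J. a j * a l * (Z j y * Z l y)) = (\<Sum>j\<in>J. (a j)\<^sup>2 * (P j * (1 - P j)))"
  proof -
    have "?E (\<lambda>y. \<Sum>j\<in>J. \<Sum>l\<in>J. a j * a l * (Z j y * Z l y)) = (\<Sum>j\<in>J. \<Sum>l\<in>J. a j * a l * ?E (\<lambda>y. Z j y * Z l y))"
      using int by (simp add: Bochner_Integration.integral_sum)
    also have "\<dots> = (\<Sum>j\<in>J. \<Sum>l\<in>J. if l = j then a j * a l * (P j * (1 - P j)) else 0)"
      by (intro sum.cong refl) (simp add: EZZ)
    also have "\<dots> = (\<Sum>j\<in>J. (a j)\<^sup>2 * (P j * (1 - P j)))"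
      using J by (simp add: sum.delta power2_eq_square)
    finally show ?thesis .
  qed
  have B: "?E (\<lambda>y. \<Sum>j\<in>J. a j * Z j y) = 0"
    using int EZ by (simp add: Bochner_Integration.integral_sum)
  show ?thesis unfolding pt using A B int
    by (simp add: Bochner_Integration.integral_add Bochner_Integration.integral_diff)
qed



lemma vv_nonneg:
  fixes v :: "real Matrix.vec"
  shows "0 \<le> scalar_prod v v"
  unfolding scalar_prod_def by (intro sum_nonneg) auto

lemma vv_pos:
  fixes v :: "real Matrix.vec"
  assumes v: "v \<in> carrier_vec n" and nz: "v \<noteq> 0\<^sub>v n"
  shows "0 < scalar_prod v v"
proof -
  obtain i where i: "i < n" "vec_index v i \<noteq> 0"
    using v nz by (metis carrier_vecD eq_vecI index_zero_vec(1) index_zero_vec(2))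
  show ?thesis unfolding scalar_prod_def
    by (rule sum_pos2[of _ i]) (use i v in \<open>auto simp: zero_less_mult_iff\<close>)
qed

lemma pd_inverse:
  fixes A :: "real mat"
  assumes A: "A \<in> carrier_mat n n"
    and pd: "\<And>v. v \<in> carrier_vec n \<Longrightarrow> v \<noteq> 0\<^sub>v n \<Longrightarrow> 0 < scalar_prod (A *\<^sub>v v) v"
  shows "\<exists>B. B \<in> carrier_mat n n \<and> A * B = 1\<^sub>m n \<and> B * A = 1\<^sub>m n"
proof -
  have "Determinant.det A \<noteq> 0"
  proof
    assume "Determinant.det A = 0"
    then obtain v where v: "v \<in> carrier_vec n" "v \<noteq> 0\<^sub>v n" "A *\<^sub>v v = 0\<^sub>v n"
      using det_0_iff_vec_prod_zero_field[OF A] by auto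
    have "scalar_prod (A *\<^sub>v v) v = 0" using v by simp
    with pd[OF v(1,2)] show False by simp
  qed
  from det_non_zero_imp_unit[OF A this, of "()"]
  show ?thesis unfolding Units_def ring_mat_simps by auto
qed

lemma count_sum:
  fixes F :: "nat \<Rightarrow> real" and sched :: "nat \<Rightarrow> nat \<Rightarrow> nat"
  assumes s: "\<forall>t<T. \<forall>r<k. sched t r < M"
  shows "(\<Sum>j\<in>{..<T}\<times>{..<k}. F (sched (fst j) (snd j)))
    = (\<Sum>i<M. real (card {(t,r). t < T \<and> r < k \<and> sched t r = i}) * F i)"
proof -
  let ?J = "{..<T}\<times>{..<k}"
  let ?g = "\<lambda>j. sched (fst j) (snd j)"
  have "(\<Sum>j\<in>?J. F (?g j)) = (\<Sum>i<M. \<Sum>j\<in>{x. x \<in> ?J \<and> ?g x = i}. F (?g j))"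
    by (rule sum.group[symmetric]) (use s in \<open>auto intro: finite_cartesian_product\<close>)
  also have "\<dots> = (\<Sum>i<M. real (card {(t,r). t < T \<and> r < k \<and> sched t r = i}) * F i)"
  proof (rule sum.cong[OF refl])
    fix i
    have e: "{x. x \<in> ?J \<and> ?g x = i} = {(t,r). t < T \<and> r < k \<and> sched t r = i}" by auto
    have "(\<Sum>j\<in>{x. x \<in> ?J \<and> ?g x = i}. F (?g j)) = (\<Sum>j\<in>{x. x \<in> ?J \<and> ?g x = i}. F i)"
      by (rule sum.cong) auto
    then show "(\<Sum>j\<in>{x. x \<in> ?J \<and> ?g x = i}. F (?g j)) = real (card {(t,r). t < T \<and> r < k \<and> sched t r = i}) * F i"
      unfolding e by simp
  qed
  finally show ?thesis .
qed

lemma amgm_sqrt: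
  fixes z s :: real
  assumes "0 \<le> z" "0 < s"
  shows "sqrt z \<le> (z / s + s) / 2"
proof -
  have "0 \<le> (sqrt z - s)\<^sup>2" by simp
  then have "2 * s * sqrt z \<le> z + s\<^sup>2" using assms by (simp add: power2_diff algebra_simps)
  then show ?thesis using assms by (simp add: field_simps power2_eq_square)
qed



lemma main_bound:
  fixes lam c' :: real and d M k T :: nat and X :: "nat \<Rightarrow> real Matrix.vec"
    and \<theta> :: "real Matrix.vec" and w :: "nat \<Rightarrow> real" and sched :: "nat \<Rightarrow> nat \<Rightarrow> nat"
  assumes lam: "lam > 0"
   and Xc: "\<forall>i<M. X i \<in> carrier_vec d"
   and th: "\<theta> \<in> carrier_vec d" and thc: "sqrt (scalar_prod \<theta> \<theta>) \<le> c'"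
   and mu: "\<forall>i<M. 0 \<le> scalar_prod (X i) \<theta> \<and> scalar_prod (X i) \<theta> \<le> 1"
   and kM: "1 \<le> k" "k \<le> M" "1 \<le> T"
   and wmin: "is_fstar_minimizer d X M k w"
   and s: "\<forall>t<T. \<forall>r<k. sched t r < M"
   and cnt: "\<forall>i<M. real (card {(t,r). t < T \<and> r < k \<and> sched t r = i}) = real k * real T * w i"
  shows "RMSE d lam X M \<theta> sched T k \<le> sqrt ((1/4 + lam * c'^2) * (fstar d X M k / (real k * real T)))"
proof -
  define J where "J = {..<T}\<times>{..<k}"
  define Y where "Y = (\<lambda>j. X (sched (fst j) (snd j)))"
  define m where "m = real k * real T"
  define V where "V = Vmat d lam X sched T k"
  define W where "W = design d X M w"
  define K where "K = 1/4 + lam * c'^2"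
  define f where "f = fstar d X M k"
  define R where "R = rewards X \<theta> sched T k"
  have Jfin: "finite J" unfolding J_def by auto
  have Yc: "\<forall>j\<in>J. Y j \<in> carrier_vec d" using Xc s unfolding J_def Y_def by auto
  have m_pos: "m > 0" using kM unfolding m_def by auto
  have K_pos: "K > 0" unfolding K_def using lam by (simp add: add_pos_nonneg)
  have Vform: "V = Matrix.mat d d (\<lambda>(a,b). (if a = b then lam else 0) + (\<Sum>j\<in>J. 1 * (vec_index (Y j) a * vec_index (Y j) b)))"
    unfolding V_def Vmat_def J_def Y_def by (rule eq_matI) (auto simp: case_prod_unfold)
  have Wform: "W = Matrix.mat d d (\<lambda>(a,b). (if a = b then 0 else 0) + (\<Sum>j\<in>{..<M}. w j * (vec_index (X j) a * vec_index (X j) b)))"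
    unfolding W_def design_def by simp
  have Vc: "V \<in> carrier_mat d d" unfolding Vform by simp
  have Wc: "W \<in> carrier_mat d d" unfolding Wform by simp
  have qV: "scalar_prod (V *\<^sub>v y) z = lam * scalar_prod y z + (\<Sum>j\<in>J. scalar_prod (Y j) y * scalar_prod (Y j) z)"
    if "y \<in> carrier_vec d" "z \<in> carrier_vec d" for y z
    unfolding Vform using qf[OF that Yc, of lam "\<lambda>_. 1"] by simp
  have qW: "scalar_prod (W *\<^sub>v y) z = (\<Sum>j<M. w j * scalar_prod (X j) y * scalar_prod (X j) z)"
    if "y \<in> carrier_vec d" "z \<in> carrier_vec d" for y z
    unfolding Wform using qf[OF that, of "{..<M}" X 0 w] Xc by simp
  have "\<exists>B. B \<in> carrier_mat d d \<and> V * B = 1\<^sub>m d \<and> B * V = 1\<^sub>m d"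
  proof (rule pd_inverse[OF Vc])
    fix v :: "real Matrix.vec" assume v: "v \<in> carrier_vec d" "v \<noteq> 0\<^sub>v d"
    have "0 < lam * scalar_prod v v" using vv_pos[OF v] lam by simp
    also have "\<dots> \<le> scalar_prod (V *\<^sub>v v) v"
      unfolding qV[OF v(1) v(1)] by (auto intro!: sum_nonneg simp: power2_eq_square[symmetric])
    finally show "0 < scalar_prod (V *\<^sub>v v) v" .
  qed
  then obtain B where B: "B \<in> carrier_mat d d" "V * B = 1\<^sub>m d" "B * V = 1\<^sub>m d" by auto
  have VB: "minv V = B" by (rule minv_unique[OF Vc B])
  have Vinv: "V *\<^sub>v (minv V *\<^sub>v z) = z" "minv V *\<^sub>v z \<in> carrier_vec d" if "z \<in> carrier_vec d" for z
  proof -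
    have "V *\<^sub>v (minv V *\<^sub>v z) = (V * B) *\<^sub>v z" unfolding VB using assoc_mult_mat_vec[OF Vc B(1) that] by simp
    then show "V *\<^sub>v (minv V *\<^sub>v z) = z" using B that by simp
    show "minv V *\<^sub>v z \<in> carrier_vec d" unfolding VB using B that by simp
  qed
  have Winv_mat: "invertible_mat W" using wmin unfolding is_fstar_minimizer_def W_def by auto
  have wcap: "w \<in> capped_simplex M k" using wmin unfolding is_fstar_minimizer_def by auto
  have wnn: "\<forall>i<M. 0 \<le> w i" using wcap unfolding capped_simplex_def by auto
  have f_eq: "f = gobj d X M w"
    unfolding f_def fstar_def
    by (rule cInf_eq_minimum) (use wmin in \<open>auto simp: is_fstar_minimizer_def\<close>)
  have thth: "scalar_prod \<theta> \<theta> \<le> c'^2"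
  proof -
    have "0 \<le> sqrt (scalar_prod \<theta> \<theta>)" using vv_nonneg[of \<theta>] by simp
    then have "(sqrt (scalar_prod \<theta> \<theta>))\<^sup>2 \<le> c'^2" by (rule power_mono[OF thc])
    then show ?thesis using vv_nonneg[of \<theta>] by simp
  qed
  have Ebound: "measure_pmf.expectation R (\<lambda>rw. (scalar_prod (X i) (ridge d lam X sched T k rw - \<theta>))\<^sup>2) \<le> K * (f / m)
      \<and> 0 \<le> f" if i: "i < M" for i
  proof -
    define x where "x = X i"
    have xc: "x \<in> carrier_vec d" using Xc i unfolding x_def by auto
    define u where "u = minv V *\<^sub>v x"
    have uc: "u \<in> carrier_vec d" and Vu: "V *\<^sub>v u = x" using Vinv[OF xc] unfolding u_def by auto
    define a where "a = (\<lambda>j. scalar_prod (Y j) u)"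
    define \<mu> where "\<mu> = (\<lambda>j. scalar_prod (Y j) \<theta>)"
    define \<beta> where "\<beta> = lam * scalar_prod u \<theta>"
    define q where "q = scalar_prod x u"
    have q_eq: "q = lam * scalar_prod u u + (\<Sum>j\<in>J. (a j)\<^sup>2)"
      unfolding q_def a_def using qV[OF uc uc] Vu by (simp add: power2_eq_square)
    have e_eq: "scalar_prod x (ridge d lam X sched T k rw - \<theta>) = (\<Sum>j\<in>J. a j * (of_bool (rw j) - \<mu> j)) - \<beta>" for rw
    proof -
      define bv where "bv = Matrix.vec d (\<lambda>a. \<Sum>(t,r)\<in>{..<T}\<times>{..<k}. of_bool (rw (t,r)) * vec_index (X (sched t r)) a)"
      have bvc: "bv \<in> carrier_vec d" unfolding bv_def by simp
      define rv where "rv = minv V *\<^sub>v bv"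
      have rvc: "rv \<in> carrier_vec d" and Vr: "V *\<^sub>v rv = bv" using Vinv[OF bvc] unfolding rv_def by auto
      have ridge_eq: "ridge d lam X sched T k rw = rv" unfolding ridge_def rv_def bv_def V_def by simp
      have bu: "scalar_prod bv u = (\<Sum>j\<in>J. of_bool (rw j) * a j)"
      proof -
        have "scalar_prod bv u = (\<Sum>l<d. (\<Sum>j\<in>J. of_bool (rw j) * vec_index (Y j) l) * vec_index u l)"
          using uc unfolding bv_def scalar_prod_def J_def Y_def by (simp add: atLeast0LessThan case_prod_unfold)
        also have "\<dots> = (\<Sum>l<d. \<Sum>j\<in>J. of_bool (rw j) * (vec_index (Y j) l * vec_index u l))"
          by (simp add: sum_distrib_right mult.assoc)
        also have "\<dots> = (\<Sum>j\<in>J. \<Sum>l<d. of_bool (rw j) * (vec_index (Y j) l * vec_index u l))"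
          by (rule sum.swap)
        also have "\<dots> = (\<Sum>j\<in>J. of_bool (rw j) * a j)"
          unfolding a_def scalar_prod_def using uc by (simp add: atLeast0LessThan sum_distrib_left)
        finally show ?thesis .
      qed
      have xr: "scalar_prod x rv = (\<Sum>j\<in>J. of_bool (rw j) * a j)"
      proof -
        have "scalar_prod x rv = lam * scalar_prod u rv + (\<Sum>j\<in>J. a j * scalar_prod (Y j) rv)"
          using qV[OF uc rvc] Vu unfolding a_def by simp
        also have "\<dots> = lam * scalar_prod rv u + (\<Sum>j\<in>J. scalar_prod (Y j) rv * a j)"
          using comm_scalar_prod[OF uc rvc] by (simp add: mult.commute)
        also have "\<dots> = scalar_prod bv u"
          using qV[OF rvc uc] Vr unfolding a_def by simp
        finally show ?thesis using bu by simp
      qed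
      have xt: "scalar_prod x \<theta> = \<beta> + (\<Sum>j\<in>J. a j * \<mu> j)"
        using qV[OF uc th] Vu unfolding a_def \<mu>_def \<beta>_def by simp
      have "scalar_prod x (ridge d lam X sched T k rw - \<theta>) = scalar_prod x rv - scalar_prod x \<theta>"
        unfolding ridge_eq by (rule scalar_prod_minus_distrib[OF xc rvc th])
      also have "\<dots> = (\<Sum>j\<in>J. a j * (of_bool (rw j) - \<mu> j)) - \<beta>"
        unfolding xr xt by (simp add: algebra_simps sum_subtractf)
      finally show ?thesis .
    qed
    have Rdef: "R = Pi_pmf J False (\<lambda>(t,r). bernoulli_pmf (scalar_prod (X (sched t r)) \<theta>))"
      unfolding R_def rewards_def J_def ..
    have \<mu>01: "\<forall>j\<in>J. 0 \<le> \<mu> j \<and> \<mu> j \<le> 1" using mu s unfolding \<mu>_def Y_def J_def by auto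
    have pj: "\<forall>j\<in>J. (\<lambda>(t,r). bernoulli_pmf (scalar_prod (X (sched t r)) \<theta>)) j = bernoulli_pmf (\<mu> j)"
      unfolding \<mu>_def Y_def by (auto simp: case_prod_unfold)
    have E_eq: "measure_pmf.expectation R (\<lambda>rw. (scalar_prod x (ridge d lam X sched T k rw - \<theta>))\<^sup>2)
        = (\<Sum>j\<in>J. (a j)\<^sup>2 * (\<mu> j * (1 - \<mu> j))) + \<beta>\<^sup>2"
      unfolding e_eq Rdef by (rule bern_var[OF Jfin \<mu>01 pj])
    have S1: "(\<Sum>j\<in>J. (a j)\<^sup>2 * (\<mu> j * (1 - \<mu> j))) \<le> (\<Sum>j\<in>J. (a j)\<^sup>2) / 4"
    proof -
      have "(\<Sum>j\<in>J. (a j)\<^sup>2 * (\<mu> j * (1 - \<mu> j))) \<le> (\<Sum>j\<in>J. (a j)\<^sup>2 * (1/4))"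
      proof (rule sum_mono)
        fix j assume "j \<in> J"
        have "\<mu> j * (1 - \<mu> j) \<le> 1/4"
        proof -
          have "0 \<le> (\<mu> j - 1/2)\<^sup>2" by simp
          then show ?thesis by (simp add: power2_eq_square algebra_simps)
        qed
        then show "(a j)\<^sup>2 * (\<mu> j * (1 - \<mu> j)) \<le> (a j)\<^sup>2 * (1/4)" by (rule mult_left_mono) simp
      qed
      then show ?thesis by (simp add: sum_divide_distrib[symmetric])
    qed
    have S2: "\<beta>\<^sup>2 \<le> lam * c'^2 * (lam * scalar_prod u u)"
    proof -
      have cs: "(scalar_prod u \<theta>)\<^sup>2 \<le> scalar_prod u u * scalar_prod \<theta> \<theta>"
        using Cauchy_Schwarz_ineq_sum[of "vec_index u" "vec_index \<theta>" "{0..<d}"] uc th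
        by (simp add: scalar_prod_def power2_eq_square)
      also have "\<dots> \<le> scalar_prod u u * c'^2" by (rule mult_left_mono[OF thth vv_nonneg])
      finally have "\<beta>\<^sup>2 \<le> lam\<^sup>2 * (scalar_prod u u * c'^2)"
        unfolding \<beta>_def power_mult_distrib using lam by (simp add: mult_left_mono)
      then show ?thesis by (simp add: power2_eq_square algebra_simps)
    qed
    have EK: "measure_pmf.expectation R (\<lambda>rw. (scalar_prod x (ridge d lam X sched T k rw - \<theta>))\<^sup>2) \<le> K * q"
    proof -
      have "lam * c'^2 * (lam * scalar_prod u u) \<le> K * (lam * scalar_prod u u)"
        unfolding K_def by (rule mult_right_mono) (use lam vv_nonneg[of u] in auto)
      moreover have "(\<Sum>j\<in>J. (a j)\<^sup>2) / 4 \<le> K * (\<Sum>j\<in>J. (a j)\<^sup>2)"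
      proof -
        have "0 \<le> (\<Sum>j\<in>J. (a j)\<^sup>2)" by (simp add: sum_nonneg)
        moreover have "1/4 \<le> K" unfolding K_def using lam by simp
        ultimately have "1/4 * (\<Sum>j\<in>J. (a j)\<^sup>2) \<le> K * (\<Sum>j\<in>J. (a j)\<^sup>2)" by (intro mult_right_mono)
        then show ?thesis by simp
      qed
      ultimately show ?thesis unfolding E_eq q_eq using S1 S2 by (simp add: algebra_simps)
    qed
    define y where "y = minv W *\<^sub>v x"
    have yc: "y \<in> carrier_vec d" and Wy: "W *\<^sub>v y = x"
      using minv_mult_vec[OF Wc Winv_mat xc] unfolding y_def by auto
    define P where "P = (\<Sum>l<M. w l * (scalar_prod (X l) u)\<^sup>2)"
    define Rr where "Rr = (\<Sum>l<M. w l * scalar_prod (X l) y * scalar_prod (X l) u)"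
    define Q where "Q = (\<Sum>l<M. w l * (scalar_prod (X l) y)\<^sup>2)"
    have qR: "q = Rr" unfolding q_def Rr_def using qW[OF yc uc] Wy by simp
    have xyQ: "scalar_prod x y = Q" unfolding Q_def using qW[OF yc yc] Wy by (simp add: power2_eq_square mult.assoc)
    have aP: "(\<Sum>j\<in>J. (a j)\<^sup>2) = m * P"
    proof -
      have "(\<Sum>j\<in>J. (a j)\<^sup>2) = (\<Sum>l<M. real (card {(t,r). t < T \<and> r < k \<and> sched t r = l}) * (scalar_prod (X l) u)\<^sup>2)"
        unfolding a_def Y_def J_def by (rule count_sum[OF s])
      also have "\<dots> = (\<Sum>l<M. m * (w l * (scalar_prod (X l) u)\<^sup>2))"
        by (rule sum.cong[OF refl]) (use cnt in \<open>simp add: m_def\<close>)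
      finally show ?thesis unfolding P_def by (simp add: sum_distrib_left)
    qed
    have nn: "0 \<le> (\<Sum>l<M. w l * (m * scalar_prod (X l) u - scalar_prod (X l) y)\<^sup>2)"
      using wnn by (intro sum_nonneg) auto
    have expand: "(\<Sum>l<M. w l * (m * scalar_prod (X l) u - scalar_prod (X l) y)\<^sup>2) = m\<^sup>2 * P - 2 * m * Rr + Q"
      unfolding P_def Rr_def Q_def
      by (simp add: power2_diff sum.distrib sum_subtractf sum_distrib_left algebra_simps power_mult_distrib)
    have mPq: "m * P \<le> q" using q_eq aP lam vv_nonneg[of u] by simp
    have "m * (m * P) \<le> m * q" using mPq m_pos by simp
    then have mq: "m * q \<le> Q" using nn expand qR by (simp add: power2_eq_square algebra_simps)
    have Qf: "Q \<le> f"
    proof -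
      have "scalar_prod x (minv W *\<^sub>v x) \<le> gobj d X M w"
        unfolding gobj_def x_def W_def using i by (intro Max_ge) auto
      then show ?thesis using xyQ f_eq unfolding y_def by simp
    qed
    have q0: "0 \<le> q" using q_eq lam vv_nonneg[of u] by (simp add: sum_nonneg)
    have qf_: "q \<le> f / m" using mq Qf m_pos by (simp add: field_simps)
    have "K * q \<le> K * (f / m)" by (rule mult_left_mono[OF qf_]) (use K_pos in simp)
    with EK have "measure_pmf.expectation R (\<lambda>rw. (scalar_prod x (ridge d lam X sched T k rw - \<theta>))\<^sup>2) \<le> K * (f / m)" by simp
    moreover have "0 \<le> f" using q0 m_pos mq Qf by (meson order.trans zero_le_mult_iff less_le_not_le)
    ultimately show ?thesis unfolding x_def by simp
  qed
  have fin: "finite (set_pmf R)" unfolding R_def rewards_def by (rule fin_Pi_pmf) auto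
  have int: "\<And>g::_ \<Rightarrow> real. integrable (measure_pmf R) g" by (rule integrable_measure_pmf_finite[OF fin])
  have Econst: "\<And>c::real. measure_pmf.expectation R (\<lambda>_. c) = c" by (simp add: measure_pmf.prob_space)
  define e where "e = (\<lambda>i rw. (scalar_prod (X i) (ridge d lam X sched T k rw - \<theta>))\<^sup>2)"
  define Z where "Z = (\<lambda>rw. (1/real M) * (\<Sum>i<M. e i rw))"
  have RM: "RMSE d lam X M \<theta> sched T k = measure_pmf.expectation R (\<lambda>rw. sqrt (Z rw))"
    unfolding RMSE_def R_def Z_def e_def ..
  have M0: "real M > 0" using kM by auto
  define Bd where "Bd = K * (f/m)"
  have f0: "0 \<le> f" using Ebound[of 0] kM by auto
  have Bd0: "0 \<le> Bd" unfolding Bd_def using K_pos f0 m_pos by simp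
  have EZ: "measure_pmf.expectation R Z \<le> Bd"
  proof -
    have "measure_pmf.expectation R Z = (1/real M) * (\<Sum>i<M. measure_pmf.expectation R (e i))"
      unfolding Z_def using int by (simp add: Bochner_Integration.integral_sum)
    also have "\<dots> \<le> (1/real M) * (\<Sum>i<M. Bd)"
      using Ebound unfolding e_def Bd_def by (intro mult_left_mono sum_mono) auto
    also have "\<dots> = Bd" using M0 by simp
    finally show ?thesis .
  qed
  have Z0: "0 \<le> Z rw" for rw unfolding Z_def e_def by (intro mult_nonneg_nonneg sum_nonneg) auto
  have key: "measure_pmf.expectation R (\<lambda>rw. sqrt (Z rw)) \<le> (Bd / s + s)/2" if s: "s > 0" for s
  proof -
    have "measure_pmf.expectation R (\<lambda>rw. sqrt (Z rw)) \<le> measure_pmf.expectation R (\<lambda>rw. Z rw / (2 * s) + s/2)"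
    proof (rule integral_mono[OF int int])
      fix rw
      have "sqrt (Z rw) \<le> (Z rw / s + s)/2" by (rule amgm_sqrt[OF Z0 s])
      also have "\<dots> = Z rw / (2 * s) + s/2" using s by (simp add: field_simps)
      finally show "sqrt (Z rw) \<le> Z rw / (2 * s) + s/2" .
    qed
    also have "\<dots> = measure_pmf.expectation R Z / (2 * s) + s/2"
      using int Econst by (simp add: Bochner_Integration.integral_add)
    also have "\<dots> \<le> Bd / (2 * s) + s/2" using EZ s by (simp add: divide_right_mono)
    also have "\<dots> = (Bd/s + s)/2" using s by (simp add: field_simps)
    finally show ?thesis .
  qed
  have final: "RMSE d lam X M \<theta> sched T k \<le> sqrt Bd"
  proof (cases "Bd > 0")
    case True
    with key[of "sqrt Bd"] show ?thesis unfolding RM by (simp add: real_div_sqrt)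
  next
    case False
    then have B0: "Bd = 0" using Bd0 by simp
    show ?thesis
    proof (rule ccontr)
      assume "\<not> ?thesis"
      then have pos: "measure_pmf.expectation R (\<lambda>rw. sqrt (Z rw)) > 0" unfolding RM B0 by simp
      with key[OF pos] B0 show False by simp
    qed
  qed
  then show ?thesis unfolding Bd_def K_def f_def m_def by simp
qed

theorem lemma1:
  fixes lam c c' :: real
  assumes "lam > 0"
  shows "\<exists>C :: real. \<exists>p :: nat. C > 0 \<and>
    (\<forall>(d::nat) (M::nat) (X :: nat \<Rightarrow> real Matrix.vec) (\<theta> :: real Matrix.vec) (k::nat) (T::nat)
        (w :: nat \<Rightarrow> real) (sched :: nat \<Rightarrow> nat \<Rightarrow> nat).
      (\<forall>i<M. X i \<in> carrier_vec d) \<and> inj_on X {..<M} \<and> spans_Rd d X M \<and>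
      (\<forall>i<M. sqrt (scalar_prod (X i) (X i)) \<le> c) \<and>
      \<theta> \<in> carrier_vec d \<and> sqrt (scalar_prod (\<theta>) (\<theta>)) \<le> c' \<and>
      (\<forall>i<M. 0 \<le> scalar_prod (X i) (\<theta>) \<and> scalar_prod (X i) (\<theta>) \<le> 1) \<and>
      1 \<le> k \<and> k \<le> M \<and> 1 \<le> T \<and>
      is_fstar_minimizer d X M k w \<and>
      (\<forall>t<T. \<forall>r<k. sched t r < M) \<and> (\<forall>t<T. inj_on (sched t) {..<k}) \<and>
      (\<forall>i<M. real (card {(t,r). t < T \<and> r < k \<and> sched t r = i}) = real k * real T * w i)
      \<longrightarrow>
      RMSE d lam X M \<theta> sched T k
        \<le> C * (ln (real d + real k * real T + 2)) ^ p * sqrt (fstar d X M k / (real k * real T)))"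
  proof -
  define C where "C = sqrt (1/4 + lam * c'^2)"
  have Cpos: "C > 0" unfolding C_def using assms by (simp add: add_pos_nonneg)
  show ?thesis
  proof (intro exI[of _ C] exI[of _ "0::nat"] conjI allI impI)
    show "C > 0" by (rule Cpos)
    fix d M :: nat and X :: "nat \<Rightarrow> real Matrix.vec" and \<theta> :: "real Matrix.vec" and k T :: nat
      and w :: "nat \<Rightarrow> real" and sched :: "nat \<Rightarrow> nat \<Rightarrow> nat"
    assume h: "(\<forall>i<M. X i \<in> carrier_vec d) \<and> inj_on X {..<M} \<and> spans_Rd d X M \<and>
      (\<forall>i<M. sqrt (scalar_prod (X i) (X i)) \<le> c) \<and>
      \<theta> \<in> carrier_vec d \<and> sqrt (scalar_prod (\<theta>) (\<theta>)) \<le> c' \<and>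
      (\<forall>i<M. 0 \<le> scalar_prod (X i) (\<theta>) \<and> scalar_prod (X i) (\<theta>) \<le> 1) \<and>
      1 \<le> k \<and> k \<le> M \<and> 1 \<le> T \<and>
      is_fstar_minimizer d X M k w \<and>
      (\<forall>t<T. \<forall>r<k. sched t r < M) \<and> (\<forall>t<T. inj_on (sched t) {..<k}) \<and>
      (\<forall>i<M. real (card {(t,r). t < T \<and> r < k \<and> sched t r = i}) = real k * real T * w i)"
    have "RMSE d lam X M \<theta> sched T k \<le> sqrt ((1/4 + lam * c'^2) * (fstar d X M k / (real k * real T)))"
      by (rule main_bound) (use h assms in auto)
    also have "\<dots> = C * (ln (real d + real k * real T + 2)) ^ 0 * sqrt (fstar d X M k / (real k * real T))"
      unfolding C_def by (simp only: real_sqrt_mult power_0 mult_1_right)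
    finally show "RMSE d lam X M \<theta> sched T k
        \<le> C * (ln (real d + real k * real T + 2)) ^ 0 * sqrt (fstar d X M k / (real k * real T))" .
  qed
qed

end
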